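(* Let $q$ be a prime power, $n$ a positive integer, $L(x)=\sum_{i=0}^{n-1}a_ix^{q^{2i}}$ with $a_i\in\mathbb F_{q^{2n}}$. For $c\in\mathbb F_{q^2}$ let $N_c$ be the number of $u\in\mathbb F_{q^{2n}}$ with $\mathrm{Tr}(uL(u^q))+c=0$. Then \[N_0=q^{2(n-1)}+(q-1)q^{2(n-1)}\sum_{\upsilon\in U}(-q)^{-R(\upsilon)}\] and, for $c\in\mathbb F_{q^2}^*$, \[N_c=q^{2(n-1)}+q^{2n-1}(-q)^{-R(-c^{1-q})}-q^{2(n-1)}\sum_{\upsilon\in U}(-q)^{-R(\upsilon)}.\]
   Context: $\mathrm{Tr}$ is the trace $\mathbb F_{q^{2n}}\to\mathbb F_{q^2}$. $L^*(x)=\sum_{i=0}^{n-1}(a_i^qx)^{q^{2(n-i-1)}}$. $U$ is the subgroup of order $q+1$ of $\mathbb F_{q^2}^*$, and for $\upsilon\in U$, $R(\upsilon)=n-\dim\ker(\upsilon L^*+L)$, where the kernel is that of the induced $\mathbb F_{q^2}$-linear map on $\mathbb F_{q^{2n}}$ and the dimension is over $\mathbb F_{q^2}$. *)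

theory Defs
  imports Complex_Main "HOL-Computational_Algebra.Primes"
begin

text \<open>The ambient field 'a is a finite field of order q^(2n), playing the role of F_{q^{2n}}.
  The subfield F_{q^2} is the set of fixed points of x \<mapsto> x^(q^2).\<close>

definition Fq2 :: "nat \<Rightarrow> ('a::{field,finite}) set" where
  "Fq2 q = {x. x ^ (q^2) = x}"

definition Tr :: "nat \<Rightarrow> nat \<Rightarrow> 'a::{field,finite} \<Rightarrow> 'a" where
  "Tr q n x = (\<Sum>j<n. x ^ (q ^ (2*j)))"

definition linL :: "nat \<Rightarrow> nat \<Rightarrow> (nat \<Rightarrow> 'a::{field,finite}) \<Rightarrow> 'a \<Rightarrow> 'a" where
  "linL q n a x = (\<Sum>i<n. a i * x ^ (q ^ (2*i)))"

definition linLstar :: "nat \<Rightarrow> nat \<Rightarrow> (nat \<Rightarrow> 'a::{field,finite}) \<Rightarrow> 'a \<Rightarrow> 'a" where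
  "linLstar q n a x = (\<Sum>i<n. (a i ^ q * x) ^ (q ^ (2*(n-i-1))))"

text \<open>Subgroup of order q+1 of F_{q^2}^*.\<close>
definition Uset :: "nat \<Rightarrow> ('a::{field,finite}) set" where
  "Uset q = {v. v ^ (q+1) = 1}"

definition sub_span :: "'a::field set \<Rightarrow> 'a set \<Rightarrow> 'a set" where
  "sub_span F B = {y. \<exists>c. (\<forall>b\<in>B. c b \<in> F) \<and> y = (\<Sum>b\<in>B. c b * b)}"

definition sub_indep :: "'a::field set \<Rightarrow> 'a set \<Rightarrow> bool" where
  "sub_indep F B = (\<forall>c. (\<forall>b\<in>B. c b \<in> F) \<and> (\<Sum>b\<in>B. c b * b) = 0 \<longrightarrow> (\<forall>b\<in>B. c b = 0))"

definition sub_basis :: "'a::field set \<Rightarrow> 'a set \<Rightarrow> 'a set \<Rightarrow> bool" where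
  "sub_basis F V B = (finite B \<and> B \<subseteq> V \<and> sub_indep F B \<and> sub_span F B = V)"

definition dim_over :: "'a::field set \<Rightarrow> 'a set \<Rightarrow> nat" where
  "dim_over F V = card (SOME B. sub_basis F V B)"

definition Rk :: "nat \<Rightarrow> nat \<Rightarrow> (nat \<Rightarrow> 'a::{field,finite}) \<Rightarrow> 'a \<Rightarrow> nat" where
  "Rk q n a v = n - dim_over (Fq2 q) {x. v * linLstar q n a x + linL q n a x = 0}"

definition Ncount :: "nat \<Rightarrow> nat \<Rightarrow> (nat \<Rightarrow> 'a::{field,finite}) \<Rightarrow> 'a \<Rightarrow> nat" where
  "Ncount q n a c = card {u. Tr q n (u * linL q n a (u ^ q)) + c = 0}"

end

theory Submission
  imports Defs "HOL-Number_Theory.Residues" "HOL-Computational_Algebra.Polynomial"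
begin

lemma card_ker_img:
  fixes f :: "'b::ab_group_add \<Rightarrow> 'c::ab_group_add"
  assumes fin: "finite A" and cl: "\<And>x y. x \<in> A \<Longrightarrow> y \<in> A \<Longrightarrow> x - y \<in> A"
    and hom: "\<And>x y. x \<in> A \<Longrightarrow> y \<in> A \<Longrightarrow> f (x - y) = f x - f y"
  shows "card A = card {x\<in>A. f x = 0} * card (f ` A)"
proof -
  have A: "A = (\<Union>y\<in>f ` A. {x\<in>A. f x = y})" by auto
  have "card A = (\<Sum>y\<in>f ` A. card {x\<in>A. f x = y})"
    by (subst A, rule card_UN_disjoint) (use fin in auto)
  also have "\<dots> = (\<Sum>y\<in>f ` A. card {x\<in>A. f x = 0})"
  proof (rule sum.cong[OF refl])
    fix y assume "y \<in> f ` A"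
    then obtain x0 where x0: "x0 \<in> A" "f x0 = y" by auto
    have z: "0 \<in> A" using cl[OF x0(1) x0(1)] by simp
    have neg: "z \<in> A \<Longrightarrow> - z \<in> A" for z using cl[OF z, of z] by simp
    have pl: "z \<in> A \<Longrightarrow> z + x0 \<in> A" for z using cl[OF x0(1) neg[of z]] by (simp add: add.commute)
    have f0: "f 0 = 0" using hom[OF x0(1) x0(1)] by simp
    have "bij_betw (\<lambda>x. x - x0) {x\<in>A. f x = y} {x\<in>A. f x = 0}"
    proof (rule bij_betwI[where g = "\<lambda>z. z + x0"])
      show "(\<lambda>x. x - x0) \<in> {x \<in> A. f x = y} \<rightarrow> {x \<in> A. f x = 0}"
        using cl x0 hom by auto
      show "(\<lambda>z. z + x0) \<in> {x \<in> A. f x = 0} \<rightarrow> {x \<in> A. f x = y}"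
      proof
        fix z assume zz: "z \<in> {x \<in> A. f x = 0}"
        have "f (z + x0 - x0) = f (z + x0) - f x0" using hom[OF pl x0(1)] zz by auto
        then show "z + x0 \<in> {x \<in> A. f x = y}" using zz pl x0 by auto
      qed
    qed auto
    then show "card {x\<in>A. f x = y} = card {x\<in>A. f x = 0}" by (rule bij_betw_same_card)
  qed
  also have "\<dots> = card {x\<in>A. f x = 0} * card (f ` A)" by simp
  finally show ?thesis .
qed

lemma roots_card_le:
  fixes p :: "'a::{comm_ring_1,ring_no_zero_divisors} poly"
  assumes "p \<noteq> 0" "degree p \<le> d" "\<And>x. x \<in> S \<Longrightarrow> poly p x = 0"
  shows "card S \<le> d"
proof -
  have "card S \<le> card {x. poly p x = 0}"
    using assms by (intro card_mono poly_roots_finite) auto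
  also have "\<dots> \<le> degree p" by (rule card_poly_roots_bound) fact
  finally show ?thesis using assms by simp
qed

lemma binom_poly:
  fixes c :: "'a::{comm_ring_1,ring_no_zero_divisors}"
  assumes "m > 0"
  shows "(monom 1 m + [:c:]) \<noteq> 0 \<and> degree (monom 1 m + [:c:]) \<le> m"
proof
  have "coeff (monom 1 m + [:c:]) m = 1" using assms by (cases m) (auto simp: coeff_monom)
  then show "(monom 1 m + [:c:]) \<noteq> 0" by (metis coeff_0 zero_neq_one)
  show "degree (monom (1::'a) m + [:c:]) \<le> m"
    by (rule degree_add_le) (auto simp: degree_monom_le)
qed

lemma trinom_poly:
  fixes c :: "'a::{comm_ring_1,ring_no_zero_divisors}"
  assumes "m > 1"
  shows "(monom 1 m + monom c 1) \<noteq> 0 \<and> degree (monom 1 m + monom c 1) \<le> m"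
proof
  have "coeff (monom 1 m + monom c 1) m = 1" using assms by (simp add: coeff_monom)
  then show "(monom 1 m + monom c 1) \<noteq> 0" by (metis coeff_0 zero_neq_one)
  show "degree (monom (1::'a) m + monom c 1) \<le> m"
    by (rule degree_add_le) (use assms in \<open>auto simp: degree_monom_le intro: order.trans[OF degree_monom_le]\<close>)
qed

locale ffq =
  fixes q n :: nat and K :: "'a::{field,finite} set"
  assumes qpp: "\<exists>k>0. q = CHAR('a) ^ k"
    and npos: "n > 0"
    and cardE: "card (UNIV::'a set) = q ^ (2*n)"
    and Kdef: "K = Fq2 q"
begin

lemma prime_char: "prime CHAR('a)"
  using finite_imp_CHAR_pos[where 'a='a] prime_CHAR_semidom by auto

lemma q_ge2: "q \<ge> 2"
proof -
  obtain k where k: "k > 0" "q = CHAR('a) ^ k" using qpp by auto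
  have "CHAR('a) \<ge> 2" using prime_char prime_ge_2_nat by blast
  then have "CHAR('a) ^ 1 \<le> CHAR('a) ^ k" using k by (intro power_increasing) auto
  then show ?thesis using k \<open>CHAR('a) \<ge> 2\<close> by simp
qed

lemma q_pos: "q > 0" using q_ge2 by simp

lemma frob_add: "((x::'a) + y) ^ (q ^ j) = x ^ (q ^ j) + y ^ (q ^ j)"
proof -
  obtain k where k: "k > 0" "q = CHAR('a) ^ k" using qpp by auto
  show ?thesis by (rule freshmans_dream'[OF prime_char, of _ "k*j"]) (simp add: k power_mult)
qed

lemma frob_add1: "((x::'a) + y) ^ q = x ^ q + y ^ q"
  using frob_add[of x y 1] by simp

lemma frob_sum: "(sum (f::'b \<Rightarrow> 'a) A) ^ (q ^ j) = (\<Sum>i\<in>A. f i ^ (q ^ j))"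
proof -
  obtain k where k: "k > 0" "q = CHAR('a) ^ k" using qpp by auto
  show ?thesis by (rule freshmans_dream_sum'[OF prime_char, of _ "k*j"]) (simp add: k power_mult)
qed

lemma frob_sum1: "(sum (f::'b \<Rightarrow> 'a) A) ^ q = (\<Sum>i\<in>A. f i ^ q)"
  using frob_sum[of f A 1] by simp

lemma frob_minus: "(- (x::'a)) ^ (q ^ j) = - (x ^ (q ^ j))"
proof -
  have "(x + - x) ^ (q ^ j) = x ^ (q ^ j) + (- x) ^ (q ^ j)" by (rule frob_add)
  moreover have "(0::'a) ^ (q ^ j) = 0" using q_pos by simp
  ultimately have "x ^ (q ^ j) + (- x) ^ (q ^ j) = 0" by simp
  then show ?thesis by (metis add_diff_cancel_left' diff_0)
qed

lemma frob_minus1: "(- (x::'a)) ^ q = - (x ^ q)"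
  using frob_minus[of x 1] by simp

lemma frob_diff: "((x::'a) - y) ^ (q ^ j) = x ^ (q ^ j) - y ^ (q ^ j)"
  using frob_add[of x "-y" j] frob_minus[of y j] by simp

lemma frob_diff1: "((x::'a) - y) ^ q = x ^ q - y ^ q"
  using frob_diff[of x y 1] by simp

lemma frob_inj: "(x::'a) ^ (q ^ j) = y ^ (q ^ j) \<Longrightarrow> x = y"
  using frob_diff[of x y j] q_pos by simp

lemma frob_inj1: "(x::'a) ^ q = y ^ q \<Longrightarrow> x = y"
  using frob_inj[of x 1 y] by simp

lemma pow_card: "(x::'a) ^ (q ^ (2*n)) = x"
proof (cases "x = 0")
  case False
  have "x * (\<Prod>y\<in>UNIV-{0}. x * y) = x * x ^ (card (UNIV :: 'a set) - 1) * \<Prod>(UNIV-{0})"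
    by (simp add: prod.distrib mult_ac)
  also have "x * x ^ (card (UNIV :: 'a set) - 1) = x ^ Suc (card (UNIV :: 'a set) - 1)"
    by (subst power_Suc) auto
  also have "Suc (card (UNIV :: 'a set) - 1) = card (UNIV :: 'a set)"
    using finite_UNIV_card_ge_0[where ?'a = 'a] by simp
  also have "(\<Prod>y\<in>UNIV-{0}. x * y) = (\<Prod>y\<in>UNIV-{0}. y)"
    by (rule prod.reindex_bij_witness[of _ "\<lambda>y. y / x" "\<lambda>y. x * y"]) (use False in auto)
  finally show ?thesis
    by (simp add: cardE)
qed (use q_pos in auto)

lemma pow_card_mult: "(x::'a) ^ (q ^ (2*n*m)) = x"
proof (induction m)
  case (Suc m)
  have "x ^ (q ^ (2*n*Suc m)) = (x ^ (q ^ (2*n*m))) ^ (q ^ (2*n))"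
    by (simp add: power_mult[symmetric] power_add[symmetric] algebra_simps)
  then show ?case using Suc pow_card by simp
qed simp

lemma pow_q_comm: "((x::'a) ^ (q ^ i)) ^ (q ^ j) = (x ^ (q ^ j)) ^ (q ^ i)"
  by (simp add: power_mult[symmetric] mult.commute)

lemma pow_pow_q: "((x::'a) ^ (q ^ i)) ^ (q ^ j) = x ^ (q ^ (i + j))"
  by (simp add: power_mult[symmetric] power_add)

lemma K_iff: "x \<in> K \<longleftrightarrow> x ^ (q^2) = x"
  by (simp add: Kdef Fq2_def)

lemma K_pow: "x \<in> K \<Longrightarrow> x ^ (q ^ (2*i)) = x"
proof (induction i)
  case (Suc i)
  have "x ^ (q ^ (2 * Suc i)) = (x ^ (q ^ (2*i))) ^ (q^2)"
    by (simp add: pow_pow_q)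
  then show ?case using Suc K_iff by simp
qed simp

lemma K_0 [simp]: "0 \<in> K" using q_pos by (simp add: K_iff)
lemma K_1 [simp]: "1 \<in> K" by (simp add: K_iff)
lemma K_add: "x \<in> K \<Longrightarrow> y \<in> K \<Longrightarrow> x + y \<in> K"
  using frob_add[of x y 2] by (simp add: K_iff)
lemma K_minus: "x \<in> K \<Longrightarrow> - x \<in> K"
  using frob_minus[of x 2] by (simp add: K_iff)
lemma K_diff: "x \<in> K \<Longrightarrow> y \<in> K \<Longrightarrow> x - y \<in> K"
  using frob_diff[of x y 2] by (simp add: K_iff)
lemma K_mult: "x \<in> K \<Longrightarrow> y \<in> K \<Longrightarrow> x * y \<in> K"
  by (simp add: K_iff power_mult_distrib)
lemma K_inverse: "x \<in> K \<Longrightarrow> inverse x \<in> K"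
  by (simp add: K_iff power_inverse)
lemma K_divide: "x \<in> K \<Longrightarrow> y \<in> K \<Longrightarrow> x / y \<in> K"
  by (simp add: K_iff power_divide)
lemma K_power: "x \<in> K \<Longrightarrow> x ^ m \<in> K"
  by (simp add: K_iff flip: power_mult) (metis K_iff mult.commute power_mult)
lemma K_sum: "(\<And>i. i \<in> A \<Longrightarrow> f i \<in> K) \<Longrightarrow> sum f A \<in> K"
  by (induction A rule: infinite_finite_induct) (auto intro: K_add)

end

context ffq
begin

definition Fq :: "'a set" where "Fq = {x. x ^ q = x}"

definition TP :: "'a poly" where "TP = (\<Sum>j<n. monom 1 (q ^ (2*j)))"

lemma poly_TP: "poly TP x = Tr q n x"
  by (simp add: TP_def Tr_def poly_sum poly_monom)

lemma q_pow_inj: "q ^ i = q ^ j \<longleftrightarrow> i = j"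
  using q_ge2 by (simp add: power_inject_exp)

lemma TP_props: "TP \<noteq> 0 \<and> degree TP \<le> q ^ (2*(n-1))"
proof
  have "coeff TP (q ^ (2*(n-1))) = (\<Sum>j<n. if q ^ (2*j) = q ^ (2*(n-1)) then 1 else 0)"
    by (simp add: TP_def coeff_sum coeff_monom)
  also have "\<dots> = (\<Sum>j<n. if j = n - 1 then 1 else 0)"
    by (intro sum.cong refl) (simp add: q_pow_inj)
  also have "\<dots> = 1" using npos by simp
  finally show "TP \<noteq> 0" by (metis coeff_0 zero_neq_one)
  show "degree TP \<le> q ^ (2*(n-1))"
    unfolding TP_def
  proof (rule degree_sum_le)
    fix j assume "j \<in> {..<n}"
    then have "q ^ (2*j) \<le> q ^ (2*(n-1))" using q_pos by (intro power_increasing) auto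
    then show "degree (monom (1::'a) (q ^ (2 * j))) \<le> q ^ (2 * (n - 1))"
      by (simp add: degree_monom_eq)
  qed simp
qed

lemma Tr_zero_card: "card {y::'a. Tr q n y = 0} \<le> q ^ (2*(n-1))"
  using TP_props by (intro roots_card_le[of TP]) (auto simp: poly_TP)

lemma Tr_nonzero: "\<exists>t::'a. Tr q n t \<noteq> 0"
proof (rule ccontr)
  assume "\<not> ?thesis"
  then have "{y::'a. Tr q n y = 0} = UNIV" by auto
  then have "q ^ (2*n) \<le> q ^ (2*(n-1))" using Tr_zero_card cardE by simp
  moreover have "q ^ (2*(n-1)) < q ^ (2*n)" using q_ge2 npos by (intro power_strict_increasing) auto
  ultimately show False by simp
qed

lemma Tr_add: "Tr q n (x + y) = Tr q n x + Tr q n (y::'a)"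
  by (simp add: Tr_def frob_add sum.distrib)

lemma Tr_diff: "Tr q n (x - y) = Tr q n x - Tr q n (y::'a)"
  by (simp add: Tr_def frob_diff sum_subtractf)

lemma Tr_sum: "Tr q n (sum f A) = (\<Sum>i\<in>A. Tr q n (f i :: 'a))"
  by (simp add: Tr_def frob_sum sum.swap[of _ "{..<n}"])

lemma Tr_scal: "c \<in> K \<Longrightarrow> Tr q n (c * x) = c * Tr q n (x::'a)"
  by (simp add: Tr_def power_mult_distrib K_pow sum_distrib_left)

lemma Tr_shift: "Tr q n ((x::'a) ^ (q^2)) = Tr q n x"
proof -
  define f where "f j = x ^ (q ^ (2*j))" for j
  have "Tr q n (x ^ (q^2)) = (\<Sum>j<n. f (Suc j))"
    by (simp add: Tr_def f_def pow_pow_q add.commute)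
  also have "\<dots> = (\<Sum>j<n. f j)"
  proof -
    have a: "(\<Sum>j<Suc n. f j) = f 0 + (\<Sum>j<n. f (Suc j))" by (rule sum.lessThan_Suc_shift)
    have b: "(\<Sum>j<Suc n. f j) = (\<Sum>j<n. f j) + f n" by simp
    have c: "f n = f 0" by (simp add: f_def pow_card)
    show ?thesis using a b c by (simp add: add.commute)
  qed
  finally show ?thesis by (simp add: Tr_def f_def)
qed

lemma Tr_shift_gen: "Tr q n ((x::'a) ^ (q^(2*m))) = Tr q n x"
proof (induction m)
  case (Suc m)
  have "x ^ (q^(2*Suc m)) = (x ^ (q^(2*m))) ^ (q^2)" by (simp add: pow_pow_q)
  then show ?case using Suc Tr_shift by simp
qed simp

lemma Tr_frob: "(Tr q n (x::'a)) ^ q = Tr q n (x ^ q)"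
  by (simp add: Tr_def frob_sum1 pow_q_comm[of x _ 1, simplified])

lemma Tr_in_K: "Tr q n (x::'a) \<in> K"
  by (simp add: K_iff Tr_def frob_sum Tr_shift[unfolded Tr_def] pow_q_comm[of x _ 2, simplified])

lemma card_K: "card K = q^2"
proof (rule antisym)
  have "K \<subseteq> {x. poly (monom 1 (q^2) + monom (-1) 1) x = 0}"
    by (auto simp: K_iff poly_monom)
  have "2*2 \<le> q*q" using q_ge2 mult_le_mono by blast
  then have "1 < q^2" by (simp add: power2_eq_square)
  from trinom_poly[OF this, where c="-1::'a"]
  show "card K \<le> q^2"
    by (intro roots_card_le[of "monom 1 (q^2) + monom (-1) 1"]) (auto simp: poly_monom K_iff)
next
  define \<phi> where "\<phi> x = x ^ (q^2) - x" for x :: 'a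
  have "card (UNIV::'a set) = card {x\<in>UNIV. \<phi> x = 0} * card (\<phi> ` UNIV)"
    by (rule card_ker_img) (auto simp: \<phi>_def frob_diff)
  moreover have "{x\<in>UNIV. \<phi> x = 0} = K" by (auto simp: \<phi>_def K_iff)
  moreover have "card (\<phi> ` UNIV) \<le> q ^ (2*(n-1))"
  proof -
    have "\<phi> ` UNIV \<subseteq> {y. Tr q n y = 0}" by (auto simp: \<phi>_def Tr_diff Tr_shift)
    then show ?thesis using Tr_zero_card by (meson card_mono finite order.trans)
  qed
  ultimately have "q^2 * q ^ (2*(n-1)) \<le> card K * q ^ (2*(n-1))"
    using cardE npos
    by (metis mult_le_mono2 power_add add_2_eq_Suc' Suc_diff_1 mult_Suc_right)
  then show "q^2 \<le> card K" using q_pos by simp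
qed

lemma Fq_sub_K: "Fq \<subseteq> K"
  by (auto simp: Fq_def K_iff power2_eq_square power_mult)

lemma card_Fq: "card Fq = q"
proof (rule antisym)
  have "Fq \<subseteq> {x. poly (monom 1 q + monom (-1) 1) x = 0}"
    by (auto simp: Fq_def poly_monom)
  have "1 < q" using q_ge2 by simp
  from trinom_poly[OF this, where c="-1::'a"]
  show "card Fq \<le> q"
    by (intro roots_card_le[of "monom 1 q + monom (-1) 1"]) (auto simp: poly_monom Fq_def)
next
  define \<psi> where "\<psi> x = x ^ q - x" for x :: 'a
  have "card K = card {x\<in>K. \<psi> x = 0} * card (\<psi> ` K)"
    by (rule card_ker_img) (auto simp: \<psi>_def frob_diff1 K_diff)
  moreover have "{x\<in>K. \<psi> x = 0} = Fq" using Fq_sub_K by (auto simp: \<psi>_def Fq_def)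
  moreover have "card (\<psi> ` K) \<le> q"
  proof -
    have "\<psi> ` K \<subseteq> {y. poly (monom 1 q + monom 1 1) y = 0}"
      by (auto simp: \<psi>_def frob_diff1 poly_monom K_iff power2_eq_square power_mult[symmetric])
    have "1 < q" using q_ge2 by simp
    from trinom_poly[OF this, where c="1::'a"] \<open>\<psi> ` K \<subseteq> _\<close>
    show ?thesis by (intro roots_card_le[of "monom 1 q + monom 1 1"]) auto
  qed
  ultimately have "q * q \<le> card Fq * q" using card_K by (simp add: power2_eq_square)
  then show "q \<le> card Fq" using q_pos by simp
qed

lemma minus_one_pow: "(-1::'a) ^ q = -1"
  using frob_minus1[of 1] by simp

lemma exists_nonFq: "\<exists>l\<in>K. l ^ q \<noteq> l"
proof (rule ccontr)
  assume "\<not> ?thesis"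
  then have "K \<subseteq> Fq" by (auto simp: Fq_def)
  then have "card K \<le> card Fq" by (intro card_mono) auto
  then have "q^2 \<le> q" by (simp add: card_K card_Fq)
  then show False using q_ge2 by (simp add: power2_eq_square)
qed

lemma norm_in_Fq: "x \<in> K \<Longrightarrow> x ^ (q+1) \<in> Fq"
proof -
  assume x: "x \<in> K"
  have "(x ^ (q+1)) ^ q = x ^ (q^2) * x ^ q"
    by (simp add: power_mult[symmetric] power_add[symmetric] power2_eq_square algebra_simps)
  then show ?thesis using x by (simp add: Fq_def K_iff)
qed

lemma norm_fiber_le: "card {x\<in>K. x ^ (q+1) = s} \<le> q + 1"
proof -
  have "{x\<in>K. x ^ (q+1) = s} \<subseteq> {x. poly (monom 1 (q+1) + [:-s:]) x = 0}"
    by (auto simp: poly_monom)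
  then show ?thesis
    using binom_poly[of "q+1" "-s"] by (intro roots_card_le[of "monom 1 (q+1) + [:-s:]"]) (auto simp: poly_monom)
qed

lemma norm_fiber: assumes "s \<in> Fq" "s \<noteq> 0" shows "card {x\<in>K. x ^ (q+1) = s} = q + 1"
proof -
  define F where "F s = {x\<in>K. x ^ (q+1) = s}" for s
  define S where "S = Fq - {0}"
  have fin: "finite S" by (simp add: S_def)
  have "K - {0} = (\<Union>s\<in>S. F s)"
    using norm_in_Fq by (auto simp: S_def F_def)
  then have "card (K - {0}) = (\<Sum>s\<in>S. card (F s))"
    by (simp, intro card_UN_disjoint) (auto simp: fin F_def)
  moreover have "card (K - {0}) = q^2 - 1" by (simp add: card_K)
  moreover have "0 \<in> Fq" using q_pos by (simp add: Fq_def)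
  then have "card S = q - 1" by (simp add: S_def card_Fq)
  ultimately have sumeq: "(\<Sum>s\<in>S. card (F s)) = (q - 1) * (q + 1)"
    by (simp add: power2_eq_square algebra_simps)
  have le: "card (F s) \<le> q + 1" for s unfolding F_def by (rule norm_fiber_le)
  have "(\<Sum>s\<in>S. (q + 1 - card (F s))) + (\<Sum>s\<in>S. card (F s)) = (\<Sum>s\<in>S. (q + 1 - card (F s)) + card (F s))"
    by (simp add: sum.distrib)
  also have "\<dots> = (\<Sum>s\<in>S. q + 1)"
    using le by (intro sum.cong) auto
  also have "\<dots> = (q - 1) * (q + 1)" using \<open>card S = q - 1\<close> by simp
  finally have "(\<Sum>s\<in>S. (q + 1 - card (F s))) = 0" using sumeq by simp
  then have "q + 1 - card (F s) = 0" using assms fin by (simp add: S_def)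
  then show ?thesis using le[of s] by (simp add: F_def)
qed

lemma U_eq: "Uset q = {x\<in>K. x ^ (q+1) = 1}"
proof -
  have "x \<in> K" if "x ^ (q+1) = 1" for x :: 'a
  proof -
    have e: "q^2 = (q+1)*(q-1) + 1" using q_pos by (simp add: power2_eq_square algebra_simps)
    have "x ^ (q^2) = x ^ ((q+1)*(q-1)+1)" using e by simp
    also have "\<dots> = (x^(q+1))^(q-1) * x" by (simp only: power_add power_mult power_one_right)
    finally have "x ^ (q^2) = (x^(q+1))^(q-1) * x" .
    then show ?thesis using that by (simp add: K_iff)
  qed
  then show ?thesis by (auto simp: Uset_def)
qed

lemma card_U: "card (Uset q :: 'a set) = q + 1"
  using norm_fiber[of 1] by (simp add: U_eq Fq_def)

lemma U_sub_K: "Uset q \<subseteq> K" by (auto simp: U_eq)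

end

context ffq
begin
definition subsp :: "'a set \<Rightarrow> bool" where
  "subsp V \<longleftrightarrow> 0 \<in> V \<and> (\<forall>x\<in>V. \<forall>y\<in>V. x + y \<in> V) \<and> (\<forall>c\<in>K. \<forall>x\<in>V. c * x \<in> V)"
end

locale hermf = ffq q n K for q n :: nat and K :: "'a::{field,finite} set" +
  fixes v :: 'a and g :: "'a \<Rightarrow> 'a \<Rightarrow> 'a"
  assumes vU: "v ^ (q+1) = 1"
    and G1a: "g (u1 + u2) w = g u1 w + g u2 w"
    and G1b: "c \<in> K \<Longrightarrow> g (c * u) w = c * g u w"
    and G2: "g w u = v * (g u w) ^ q"
    and G3: "g u w \<in> K"
begin

definition rad :: "'a set \<Rightarrow> 'a set" where "rad V = {u\<in>V. \<forall>w\<in>V. g u w = 0}"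
definition Zc :: "'a set \<Rightarrow> 'a \<Rightarrow> nat" where "Zc V t = card {u\<in>V. g u u = t}"

lemma v_nz: "v \<noteq> 0" using vU by auto
lemma v_K: "v \<in> K" using vU U_sub_K by (auto simp: Uset_def)

lemma G_add2: "g u (w1 + w2) = g u w1 + g u w2"
  by (simp add: G2[of u] G1a frob_add1 algebra_simps)

lemma G_scal2: "c \<in> K \<Longrightarrow> g u (c * w) = c ^ q * g u w"
  by (simp add: G2[of u] G1b power_mult_distrib algebra_simps)

lemma G_0 [simp]: "g 0 w = 0" using G1b[of 0 0 w] by simp
lemma G_0' [simp]: "g u 0 = 0" using G_scal2[of 0 u 0] q_pos by (simp add: power_0_left)

lemma G_minus1: "g (- u) w = - g u w" using G1b[of "-1" u w] K_minus[OF K_1] by simp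
lemma G_diff1: "g (u1 - u2) w = g u1 w - g u2 w" using G1a[of u1 "-u2" w] G_minus1 by simp

lemma Q_add: "g (u + w) (u + w) = g u u + g u w + g w u + g w w"
  by (simp add: G1a G_add2)

lemma Q_scal: "c \<in> K \<Longrightarrow> g (c * u) (c * u) = c ^ (q+1) * g u u"
  by (simp add: G1b G_scal2)

lemma g_selfadj: "g u u = v * (g u u) ^ q" using G2[of u u] .

lemma base_zero:
  assumes V: "subsp V" and Q0: "\<forall>u\<in>V. g u u = 0" and u: "u \<in> V" and w: "w \<in> V"
  shows "g u w = 0"
proof -
  have sym0: "g x y + v * (g x y) ^ q = 0" if "x \<in> V" "y \<in> V" for x y
  proof -
    have "x + y \<in> V" using V that by (auto simp: subsp_def)
    then have "g (x+y) (x+y) = 0" using Q0 by auto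
    then show ?thesis using Q0 that Q_add[of x y] G2[of y x] by simp
  qed
  obtain l where l: "l \<in> K" "l ^ q \<noteq> l" using exists_nonFq by auto
  have lu: "l * u \<in> V" using V l u by (auto simp: subsp_def)
  have e1: "v * (g u w) ^ q = - g u w" using sym0[OF u w] by (simp add: eq_neg_iff_add_eq_0 add.commute)
  have "l * g u w + v * (l * g u w) ^ q = 0" using sym0[OF lu w] G1b[OF l(1)] by simp
  then have "l * g u w + l ^ q * (v * (g u w) ^ q) = 0" by (simp add: power_mult_distrib algebra_simps)
  then have "(l - l ^ q) * g u w = 0" using e1 by (simp add: algebra_simps)
  then show ?thesis using l by simp
qed

lemma subsp_finite: "finite V" for V :: "'a set" by simp

lemma subsp_scal: "subsp V \<Longrightarrow> c \<in> K \<Longrightarrow> x \<in> V \<Longrightarrow> c * x \<in> V"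
  by (auto simp: subsp_def)
lemma subsp_add: "subsp V \<Longrightarrow> x \<in> V \<Longrightarrow> y \<in> V \<Longrightarrow> x + y \<in> V"
  by (auto simp: subsp_def)
lemma subsp_diff: "subsp V \<Longrightarrow> x \<in> V \<Longrightarrow> y \<in> V \<Longrightarrow> x - y \<in> V"
  using subsp_add[of V x "(-1) * y"] subsp_scal[of V "-1" y] K_minus[OF K_1] by simp

lemma norm_Fq_pow: "x \<in> K \<Longrightarrow> (x ^ (q+1)) ^ q = x ^ (q+1)"
  using norm_in_Fq by (simp add: Fq_def)

lemma count_main:
  assumes "subsp V"
  shows "\<exists>r. card V = q^(2*r) * card (rad V) \<and>
    real q * real (Zc V 0) = real (card V) + (real q - 1) * real (card V) * (-1/real q)^r \<and>
    (\<forall>t\<in>K. t \<noteq> 0 \<longrightarrow> t = v * t^q \<longrightarrow>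
       real q * real (Zc V t) = real (card V) - real (card V) * (-1/real q)^r)"
  using assms
proof (induction "card V" arbitrary: V rule: less_induct)
  case less
  note V = less.prems
  show ?case
  proof (cases "\<forall>u\<in>V. g u u = 0")
    case True
    have radV: "rad V = V" using base_zero[OF V True] by (auto simp: rad_def)
    have "{u\<in>V. g u u = 0} = V" using True by auto
    then have Z0: "Zc V 0 = card V" by (simp add: Zc_def)
    have Zt: "Zc V t = 0" if "t \<noteq> 0" for t
    proof -
      have "{u\<in>V. g u u = t} = {}" using True that by auto
      then show ?thesis by (simp add: Zc_def)
    qed
    show ?thesis by (rule exI[of _ 0]) (auto simp: radV Z0 Zt algebra_simps)
  next
    case False
    then obtain u0 where u0: "u0 \<in> V" "g u0 u0 \<noteq> 0" by auto
    define a where "a = g u0 u0"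
    define W where "W = {y\<in>V. g y u0 = 0}"
    have aK: "a \<in> K" using G3 by (simp add: a_def)
    have anz: "a \<noteq> 0" using u0 by (simp add: a_def)
    have a_sa: "a = v * a ^ q" using g_selfadj by (simp add: a_def)
    have Wsub: "subsp W"
      using V unfolding subsp_def W_def by (auto simp: G1a G1b)
    have WV: "W \<subseteq> V" by (auto simp: W_def)
    have u0W: "u0 \<notin> W" using u0 by (simp add: W_def)
    have cardlt: "card W < card V"
      using WV u0W u0(1) by (intro psubset_card_mono) auto
    obtain r' where IH1: "card W = q^(2*r') * card (rad W)"
      and IH2: "real q * real (Zc W 0) = real (card W) + (real q - 1) * real (card W) * (-1/real q)^r'"
      and IH3: "\<And>t. t \<in> K \<Longrightarrow> t \<noteq> 0 \<Longrightarrow> t = v * t^q \<Longrightarrow>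
           real q * real (Zc W t) = real (card W) - real (card W) * (-1/real q)^r'"
      using less.hyps[OF cardlt Wsub] by blast
    have radW: "rad W = rad V"
    proof
      show "rad V \<subseteq> rad W" using WV u0 by (auto simp: rad_def W_def)
      show "rad W \<subseteq> rad V"
      proof
        fix u assume u: "u \<in> rad W"
        then have uW: "u \<in> W" by (simp add: rad_def)
        have "g u w = 0" if w: "w \<in> V" for w
        proof -
          define x where "x = g w u0 / a"
          have xK: "x \<in> K" using G3 aK by (simp add: x_def K_divide)
          define y where "y = w - x * u0"
          have yV: "y \<in> V" using subsp_diff[OF V w subsp_scal[OF V xK u0(1)]] by (simp add: y_def)
          have "g y u0 = g w u0 - x * a" by (simp add: y_def G_diff1 G1b[OF xK] a_def)
          also have "\<dots> = 0" using anz by (simp add: x_def)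
          finally have "g y u0 = 0" .
          then have yW: "y \<in> W" using yV by (simp add: W_def)
          have wsplit: "w = x * u0 + y" by (simp add: y_def)
          have "g u w = x ^ q * g u u0 + g u y" by (simp add: wsplit G_add2 G_scal2[OF xK])
          also have "\<dots> = 0" using uW u yW by (auto simp: W_def rad_def)
          finally show ?thesis .
        qed
        then show "u \<in> rad V" using uW WV by (auto simp: rad_def)
      qed
    qed
    have Qdec: "g (x*u0 + y) (x*u0 + y) = x^(q+1) * a + g y y" if "x \<in> K" "y \<in> W" for x y
    proof -
      have "g y u0 = 0" using that by (simp add: W_def)
      then have "g u0 y = 0" using G2[of u0 y] q_pos by (simp add: power_0_left)
      then show ?thesis using that \<open>g y u0 = 0\<close>
        by (simp add: Q_add Q_scal a_def G1b G_scal2)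
    qed
    have surj: "\<exists>x\<in>K. \<exists>y\<in>W. u = x * u0 + y" if u: "u \<in> V" for u
    proof -
      define x where "x = g u u0 / a"
      have xK: "x \<in> K" using G3 aK by (simp add: x_def K_divide)
      define y where "y = u - x * u0"
      have yV: "y \<in> V" using subsp_diff[OF V u subsp_scal[OF V xK u0(1)]] by (simp add: y_def)
      have "g y u0 = g u u0 - x * a" by (simp add: y_def G_diff1 G1b[OF xK] a_def)
      also have "\<dots> = 0" using anz by (simp add: x_def)
      finally have "g y u0 = 0" .
      then have yW: "y \<in> W" using yV by (simp add: W_def)
      show ?thesis using xK yW by (intro bexI[OF _ xK] bexI[OF _ yW]) (simp add: y_def)
    qed
    have intoV: "x * u0 + y \<in> V" if "x \<in> K" "y \<in> W" for x y
      using that WV V u0(1) by (auto intro!: subsp_add subsp_scal)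
    define f where "f = (\<lambda>(x,y). x * u0 + y)"
    have inj: "inj_on f (K \<times> W)"
    proof (rule inj_onI)
      fix p1 p2 assume p1: "p1 \<in> K \<times> W" and p2: "p2 \<in> K \<times> W" and e: "f p1 = f p2"
      obtain x1 y1 where 1: "p1 = (x1, y1)" "x1 \<in> K" "y1 \<in> W" using p1 by auto
      obtain x2 y2 where 2: "p2 = (x2, y2)" "x2 \<in> K" "y2 \<in> W" using p2 by auto
      have e': "x1 * u0 + y1 = x2 * u0 + y2" using e 1 2 by (simp add: f_def)
      have "g (x1 * u0 + y1) u0 = x1 * a" using 1 by (simp add: G1a G1b a_def W_def)
      moreover have "g (x2 * u0 + y2) u0 = x2 * a" using 2 by (simp add: G1a G1b a_def W_def)
      ultimately have "x1 * a = x2 * a" using e' by metis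
      then have "x1 = x2" using anz by simp
      then show "p1 = p2" using e' 1 2 by simp
    qed
    have imgV: "f ` (K \<times> W) = V"
      using surj intoV by (force simp: f_def)
    have cardV: "card V = q^2 * card W"
      using card_image[OF inj] imgV by (simp add: card_cartesian_product card_K)
    have cnt: "Zc V t = (\<Sum>x\<in>K. Zc W (t - x^(q+1)*a))" for t
    proof -
      define S where "S = Sigma K (\<lambda>x. {y\<in>W. g y y = t - x^(q+1)*a})"
      have SKW: "S \<subseteq> K \<times> W" by (auto simp: S_def)
      have "f ` S = {u\<in>V. g u u = t}"
      proof
        show "f ` S \<subseteq> {u\<in>V. g u u = t}"
          using intoV Qdec by (auto simp: S_def f_def)
        show "{u\<in>V. g u u = t} \<subseteq> f ` S"
        proof
          fix u assume "u \<in> {u\<in>V. g u u = t}"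
          then have uV: "u \<in> V" and ut: "g u u = t" by auto
          obtain x y where xy: "x \<in> K" "y \<in> W" "u = x * u0 + y" using surj[OF uV] by auto
          have "x^(q+1) * a + g y y = t" using Qdec[OF xy(1,2)] ut xy(3) by simp
          then have "g y y = t - x^(q+1)*a" by (simp add: algebra_simps)
          then have "(x,y) \<in> S" using xy by (simp add: S_def)
          then show "u \<in> f ` S" using xy by (force simp: f_def)
        qed
      qed
      then have "Zc V t = card (f ` S)" by (simp add: Zc_def)
      also have "\<dots> = card S" using inj_on_subset[OF inj SKW] by (rule card_image)
      also have "\<dots> = (\<Sum>x\<in>K. card {y\<in>W. g y y = t - x^(q+1)*a})"
        unfolding S_def by (rule card_SigmaI) auto
      finally show ?thesis by (simp add: Zc_def)
    qed
    define rho' where "rho' = (-1/real q)^r'"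
    define Zs where "Zs = (real (card W) - real (card W) * rho') / real q"
    have qnz: "real q \<noteq> 0" using q_pos by simp
    have val: "real (Zc W (t - x^(q+1)*a)) = (if x^(q+1) = t/a then real (Zc W 0) else Zs)"
      if t: "t \<in> K" "t = v * t^q" and x: "x \<in> K" for t x
    proof (cases "x^(q+1) = t/a")
      case True
      then show ?thesis using anz by simp
    next
      case False
      define s where "s = t - x^(q+1)*a"
      have sK: "s \<in> K" using t x aK by (simp add: s_def K_diff K_mult K_power)
      have snz: "s \<noteq> 0" using False anz by (simp add: s_def field_simps)
      have "s^q = t^q - (x^(q+1))^q * a^q" by (simp only: s_def frob_diff1 power_mult_distrib)
      then have "s^q = t^q - x^(q+1) * a^q" unfolding norm_Fq_pow[OF x] .
      then have "v * s^q = v * t^q - x^(q+1) * (v * a^q)" by (simp only: right_diff_distrib mult.left_commute)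
      then have ssa: "s = v * s^q" using t a_sa by (simp add: s_def)
      have "real q * real (Zc W s) = real (card W) - real (card W) * rho'"
        using IH3[OF sK snz ssa] by (simp add: rho'_def)
      then have "real (Zc W s) = Zs" using qnz by (simp add: Zs_def field_simps)
      then show ?thesis using False by (simp add: s_def)
    qed
    have split: "real (Zc V t) = real (card {x\<in>K. x^(q+1) = t/a}) * real (Zc W 0)
        + (real q^2 - real (card {x\<in>K. x^(q+1) = t/a})) * Zs"
      if t: "t \<in> K" "t = v * t^q" for t
    proof -
      define P where "P = {x. x^(q+1) = t/a}"
      have cc: "card (K \<inter> P) + card (K - P) = card K"
      proof -
        have "K \<inter> P \<union> (K - P) = K" by blast
        moreover have "K \<inter> P \<inter> (K - P) = {}" by blast
        ultimately show ?thesis using card_Un_disjoint[of "K \<inter> P" "K - P"] by (metis finite)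
      qed
      then have cr: "real (card (K - P)) = real q^2 - real (card (K \<inter> P))"
        using card_K by (metis add_diff_cancel_left' of_nat_add of_nat_diff of_nat_power le_add1)
      have "real (Zc V t) = (\<Sum>x\<in>K. real (Zc W (t - x^(q+1)*a)))"
        by (simp add: cnt)
      also have "\<dots> = (\<Sum>x\<in>K. if x \<in> P then real (Zc W 0) else Zs)"
        using val[OF t] by (intro sum.cong) (auto simp: P_def)
      also have "\<dots> = real (card (K \<inter> P)) * real (Zc W 0) + real (card (K - P)) * Zs"
        by (simp add: sum.If_cases Diff_eq)
      finally have X: "real (Zc V t) = real (card (K \<inter> P)) * real (Zc W 0) + real (card (K - P)) * Zs" .
      have eqKP: "K \<inter> P = {x\<in>K. x^(q+1) = t/a}" by (auto simp: P_def)
      show ?thesis using X[unfolded cr eqKP] .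
    qed
    have m0: "card {x\<in>K. x^(q+1) = 0/a} = 1"
    proof -
      have "{x\<in>K. x^(q+1) = 0/a} = {0}" by auto
      then show ?thesis by simp
    qed
    have mt: "card {x\<in>K. x^(q+1) = t/a} = q + 1" if t: "t \<in> K" "t \<noteq> 0" "t = v * t^q" for t
    proof (rule norm_fiber)
      show "t / a \<noteq> 0" using t anz by simp
      have "(t/a)^q = t^q / a^q" by (simp add: power_divide)
      also have "\<dots> = (v * t^q) / (v * a^q)" using v_nz by simp
      also have "\<dots> = t / a" using t(3) a_sa by simp
      finally show "t / a \<in> Fq" by (simp add: Fq_def)
    qed
    have cV: "real (card V) = real q^2 * real (card W)" by (simp add: cardV)
    have qZs: "real q * Zs = real (card W) - real (card W) * rho'" using qnz by (simp add: Zs_def)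
    have rs: "(-1/real q)^(Suc r') = - rho' / real q"
      by (simp add: rho'_def)
    show ?thesis
    proof (intro exI[of _ "Suc r'"] conjI ballI impI)
      show "card V = q ^ (2 * Suc r') * card (rad V)"
        by (simp add: cardV IH1 radW power_add power_mult algebra_simps power2_eq_square)
      have "real (Zc V 0) = real (Zc W 0) + (real q^2 - 1) * Zs"
        using split[of 0] m0 q_pos by simp
      then have "real q * real (Zc V 0) = real q * (real (Zc W 0) + (real q^2 - 1) * Zs)" by simp
      also have "\<dots> = real q * real (Zc W 0) + (real q^2 - 1) * (real q * Zs)"
        by (simp add: algebra_simps)
      also have "\<dots> = real (card W) + (real q - 1) * real (card W) * rho'
          + (real q^2 - 1) * (real (card W) - real (card W) * rho')"
        using IH2 qZs by (simp add: rho'_def)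
      also have "\<dots> = real q^2 * real (card W) - (real q - 1) * real q * real (card W) * rho'"
        by (simp add: algebra_simps power2_eq_square)
      also have "\<dots> = real (card V) + (real q - 1) * real (card V) * (-1/real q)^(Suc r')"
        unfolding cV rs using qnz by (simp add: field_simps power2_eq_square)
      finally show "real q * real (Zc V 0) = real (card V) + (real q - 1) * real (card V) * (-1/real q)^(Suc r')" .
    next
      fix t assume t: "t \<in> K" "t \<noteq> 0" "t = v * t^q"
      have "real (Zc V t) = (real q + 1) * real (Zc W 0) + (real q^2 - (real q + 1)) * Zs"
        using split[OF t(1,3)] mt[OF t] by (simp add: algebra_simps)
      then have "real q * real (Zc V t) = real q * ((real q + 1) * real (Zc W 0) + (real q^2 - (real q + 1)) * Zs)" by simp
      also have "\<dots> = (real q + 1) * (real q * real (Zc W 0)) + (real q^2 - (real q + 1)) * (real q * Zs)"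
        by (simp add: algebra_simps)
      also have "\<dots> = (real q + 1) * (real (card W) + (real q - 1) * real (card W) * rho')
          + (real q^2 - (real q + 1)) * (real (card W) - real (card W) * rho')"
        using IH2 qZs by (simp add: rho'_def)
      also have "\<dots> = real q^2 * real (card W) + real q * real (card W) * rho'"
        by (simp add: algebra_simps power2_eq_square)
      also have "\<dots> = real (card V) - real (card V) * (-1/real q)^(Suc r')"
        unfolding cV rs using qnz by (simp add: field_simps power2_eq_square)
      finally show "real q * real (Zc V t) = real (card V) - real (card V) * (-1/real q)^(Suc r')" .
    qed
  qed
qed

end

context ffq
begin

lemma subsp_sum: "subsp V \<Longrightarrow> (\<And>i. i \<in> A \<Longrightarrow> f i \<in> V) \<Longrightarrow> sum f A \<in> V"
  by (induction A rule: infinite_finite_induct) (auto simp: subsp_def)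

lemma span_sub: assumes "subsp V" "B \<subseteq> V" shows "sub_span K B \<subseteq> V"
proof
  fix y assume "y \<in> sub_span K B"
  then obtain c where c: "\<forall>b\<in>B. c b \<in> K" "y = (\<Sum>b\<in>B. c b * b)" by (auto simp: sub_span_def)
  show "y \<in> V" unfolding c(2) using assms c(1) by (intro subsp_sum) (auto simp: subsp_def)
qed

lemma card_span:
  assumes fin: "finite B" and ind: "sub_indep K B"
  shows "card (sub_span K B) = card K ^ card B"
proof -
  define \<phi> where "\<phi> c = (\<Sum>b\<in>B. c b * b)" for c :: "'a \<Rightarrow> 'a"
  have img: "\<phi> ` (PiE B (\<lambda>_. K)) = sub_span K B"
  proof
    show "\<phi> ` (PiE B (\<lambda>_. K)) \<subseteq> sub_span K B"
      by (auto simp: sub_span_def \<phi>_def PiE_def Pi_def)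
    show "sub_span K B \<subseteq> \<phi> ` (PiE B (\<lambda>_. K))"
    proof
      fix y assume "y \<in> sub_span K B"
      then obtain c where c: "\<forall>b\<in>B. c b \<in> K" "y = (\<Sum>b\<in>B. c b * b)" by (auto simp: sub_span_def)
      have "restrict c B \<in> PiE B (\<lambda>_. K)" using c(1) by auto
      moreover have "\<phi> (restrict c B) = y" unfolding \<phi>_def c(2) by (intro sum.cong) auto
      ultimately show "y \<in> \<phi> ` (PiE B (\<lambda>_. K))" by (metis imageI)
    qed
  qed
  have inj: "inj_on \<phi> (PiE B (\<lambda>_. K))"
  proof (rule inj_onI)
    fix c c' assume c: "c \<in> PiE B (\<lambda>_. K)" and c': "c' \<in> PiE B (\<lambda>_. K)" and e: "\<phi> c = \<phi> c'"
    have "(\<Sum>b\<in>B. (c b - c' b) * b) = 0"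
      using e by (simp add: \<phi>_def left_diff_distrib sum_subtractf)
    moreover have "\<forall>b\<in>B. c b - c' b \<in> K" using c c' by (auto intro: K_diff)
    ultimately have "\<forall>b\<in>B. c b - c' b = 0"
      using ind[unfolded sub_indep_def, rule_format, of "\<lambda>b. c b - c' b"] by blast
    then show "c = c'" using c c' by (intro PiE_ext[OF c c']) auto
  qed
  have "card (sub_span K B) = card (PiE B (\<lambda>_. K))"
    using card_image[OF inj] img by simp
  also have "\<dots> = card K ^ card B" using fin by (simp add: card_PiE)
  finally show ?thesis .
qed

lemma in_span_self: "y \<in> B \<Longrightarrow> finite B \<Longrightarrow> y \<in> sub_span K B"
proof -
  assume y: "y \<in> B" and fin: "finite B"
  define c where "c b = (if b = y then 1 else (0::'a))" for b :: 'a
  have "(\<Sum>b\<in>B. c b * b) = (\<Sum>b\<in>B. if b = y then b else 0)" by (intro sum.cong) (auto simp: c_def)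
  also have "\<dots> = y" using y fin by (simp add: sum.delta')
  finally have "(\<Sum>b\<in>B. c b * b) = y" .
  moreover have "\<forall>b\<in>B. c b \<in> K" by (simp add: c_def)
  ultimately show ?thesis unfolding sub_span_def by (intro CollectI exI[where x=c] conjI) auto
qed

lemma indep_insert:
  assumes fin: "finite B" and ind: "sub_indep K B" and y: "y \<notin> sub_span K B"
  shows "sub_indep K (insert y B)"
  unfolding sub_indep_def
proof (intro allI impI)
  fix c assume h: "(\<forall>b\<in>insert y B. c b \<in> K) \<and> (\<Sum>b\<in>insert y B. c b * b) = 0"
  have yB: "y \<notin> B" using y in_span_self fin by blast
  have s: "c y * y + (\<Sum>b\<in>B. c b * b) = 0" using h yB fin by simp
  have cy: "c y = 0"
  proof (rule ccontr)
    assume cy: "c y \<noteq> 0"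
    have "y = (\<Sum>b\<in>B. (- c b / c y) * b)"
    proof -
      have "y = - (\<Sum>b\<in>B. c b * b) / c y" using s cy by (simp add: field_simps eq_neg_iff_add_eq_0)
      also have "\<dots> = (\<Sum>b\<in>B. (- c b / c y) * b)"
        by (simp add: sum_divide_distrib sum_negf[symmetric])
      finally show ?thesis .
    qed
    moreover have "\<forall>b\<in>B. - c b / c y \<in> K" using h by (auto intro!: K_divide K_minus)
    ultimately have "y \<in> sub_span K B" unfolding sub_span_def
      by (intro CollectI exI[where x="\<lambda>b. - c b / c y"] conjI) auto
    then show False using y by simp
  qed
  then have "(\<Sum>b\<in>B. c b * b) = 0" using s by simp
  then have "\<forall>b\<in>B. c b = 0" using ind h unfolding sub_indep_def by blast
  then show "\<forall>b\<in>insert y B. c b = 0" using cy by simp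
qed

lemma basis_exists:
  assumes V: "subsp V"
  shows "\<exists>B. sub_basis K V B"
proof -
  define S where "S = {B. B \<subseteq> V \<and> sub_indep K B}"
  have finS: "finite S" by (simp add: S_def)
  have "{} \<in> S" by (simp add: S_def sub_indep_def)
  then have ne: "card ` S \<noteq> {}" by auto
  define m where "m = Max (card ` S)"
  have "m \<in> card ` S" unfolding m_def using finS ne by (intro Max_in) auto
  then obtain B where B: "B \<in> S" "card B = m" by auto
  have maxB: "card B' \<le> card B" if "B' \<in> S" for B'
    using Max_ge[of "card ` S" "card B'"] finS that B(2) unfolding m_def by auto
  have "sub_span K B = V"
  proof
    show "sub_span K B \<subseteq> V" using B V span_sub by (auto simp: S_def)
    show "V \<subseteq> sub_span K B"
    proof
      fix y assume yV: "y \<in> V"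
      show "y \<in> sub_span K B"
      proof (rule ccontr)
        assume ny: "y \<notin> sub_span K B"
        have yB: "y \<notin> B" using ny in_span_self[of y B] by auto
        have "insert y B \<in> S" using B yV indep_insert[OF _ _ ny] by (auto simp: S_def)
        then have "card (insert y B) \<le> card B" by (rule maxB)
        then show False using yB by simp
      qed
    qed
  qed
  then show ?thesis using B by (auto simp: sub_basis_def S_def)
qed

lemma card_dim:
  assumes V: "subsp V"
  shows "card V = (q^2) ^ dim_over K V"
proof -
  have "sub_basis K V (SOME B. sub_basis K V B)" using basis_exists[OF V] by (rule someI_ex)
  then have b: "finite (SOME B. sub_basis K V B)" "sub_indep K (SOME B. sub_basis K V B)"
      "sub_span K (SOME B. sub_basis K V B) = V"
    by (auto simp: sub_basis_def)
  show ?thesis using card_span[OF b(1,2)] b(3) by (simp add: dim_over_def card_K)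
qed

end

context ffq
begin

lemma L_add: "linL q n a (x + y) = linL q n a x + linL q n a (y::'a)"
  by (simp add: linL_def frob_add distrib_left sum.distrib)

lemma L_scal: "c \<in> K \<Longrightarrow> linL q n a (c * x) = c * linL q n a (x::'a)"
proof -
  assume c: "c \<in> K"
  have t: "a i * (c * x) ^ (q ^ (2 * i)) = c * (a i * x ^ (q ^ (2 * i)))" for i
  proof -
    have "(c * x) ^ (q ^ (2 * i)) = c ^ (q ^ (2 * i)) * x ^ (q ^ (2 * i))" by (rule power_mult_distrib)
    also have "c ^ (q ^ (2 * i)) = c" by (rule K_pow[OF c])
    finally show ?thesis by (simp add: algebra_simps)
  qed
  show ?thesis unfolding linL_def sum_distrib_left by (rule sum.cong[OF refl]) (rule t)
qed

lemma Ls_add: "linLstar q n a (x + y) = linLstar q n a x + linLstar q n a (y::'a)"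
  by (simp add: linLstar_def frob_add distrib_left sum.distrib)

lemma Ls_scal: "c \<in> K \<Longrightarrow> linLstar q n a (c * x) = c * linLstar q n a (x::'a)"
proof -
  assume c: "c \<in> K"
  have t: "(a i ^ q * (c * x)) ^ (q ^ (2 * (n - i - 1))) = c * (a i ^ q * x) ^ (q ^ (2 * (n - i - 1)))" for i
  proof -
    have "(a i ^ q * (c * x)) ^ (q ^ (2 * (n - i - 1))) = c ^ (q ^ (2 * (n - i - 1))) * (a i ^ q * x) ^ (q ^ (2 * (n - i - 1)))"
    proof -
      have e: "a i ^ q * (c * x) = c * (a i ^ q * x)" by (simp add: algebra_simps)
      show ?thesis unfolding e by (rule power_mult_distrib)
    qed
    also have "c ^ (q ^ (2 * (n - i - 1))) = c" by (rule K_pow[OF c])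
    finally show ?thesis .
  qed
  show ?thesis unfolding linLstar_def sum_distrib_left by (rule sum.cong[OF refl]) (rule t)
qed

lemma crux: "Tr q n ((u::'a) * linLstar q n a (w ^ q)) = (Tr q n (w * linL q n a (u ^ q))) ^ q"
proof -
  have "(Tr q n (w * linL q n a (u ^ q))) ^ q = Tr q n ((w * linL q n a (u ^ q)) ^ q)"
    using Tr_frob[of "w * linL q n a (u ^ q)"] by simp
  also have "(w * linL q n a (u ^ q)) ^ q = (\<Sum>i<n. w ^ q * a i ^ q * u ^ (q ^ (2*i + 2)))"
  proof -
    have "(w * linL q n a (u ^ q)) ^ q = w ^ q * (\<Sum>i<n. (a i * (u ^ q) ^ (q ^ (2*i))) ^ q)"
      by (simp add: linL_def power_mult_distrib frob_sum1)
    also have "\<dots> = (\<Sum>i<n. w ^ q * a i ^ q * u ^ (q ^ (2*i + 2)))"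
      unfolding sum_distrib_left
    proof (intro sum.cong refl)
      fix i
      have "((u ^ q) ^ (q ^ (2*i))) ^ q = u ^ (q ^ (2*i+2))"
        using pow_pow_q[of "u ^ q" "2*i" 1] pow_pow_q[of u 1 "2*i+1"] by (simp add: add.commute)
      then show "w ^ q * (a i * (u ^ q) ^ q ^ (2 * i)) ^ q = w ^ q * a i ^ q * u ^ q ^ (2 * i + 2)"
        by (simp add: power_mult_distrib mult.assoc)
    qed
    finally show ?thesis .
  qed
  finally have R: "(Tr q n (w * linL q n a (u ^ q))) ^ q = (\<Sum>i<n. Tr q n (w ^ q * a i ^ q * u ^ (q ^ (2*i + 2))))"
    by (simp add: Tr_sum)
  have "Tr q n (u * linLstar q n a (w ^ q)) = (\<Sum>i<n. Tr q n (u * (a i ^ q * w ^ q) ^ (q ^ (2 * (n - i - 1)))))"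
    by (simp add: linLstar_def sum_distrib_left Tr_sum)
  also have "\<dots> = (\<Sum>i<n. Tr q n (w ^ q * a i ^ q * u ^ (q ^ (2*i + 2))))"
  proof (intro sum.cong refl)
    fix i assume i: "i \<in> {..<n}"
    define X where "X = u * (a i ^ q * w ^ q) ^ (q ^ (2 * (n - i - 1)))"
    have "Tr q n X = Tr q n (X ^ (q ^ (2 * (i+1))))" by (rule Tr_shift_gen[symmetric])
    also have "X ^ (q ^ (2 * (i+1))) = u ^ (q ^ (2*(i+1))) * ((a i ^ q * w ^ q) ^ (q ^ (2 * (n - i - 1)))) ^ (q ^ (2 * (i+1)))"
      unfolding X_def by (rule power_mult_distrib)
    also have "((a i ^ q * w ^ q) ^ (q ^ (2 * (n - i - 1)))) ^ (q ^ (2 * (i+1))) = a i ^ q * w ^ q"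
    proof -
      have ex: "2 * (n - i - 1) + 2 * (i+1) = 2 * n" using i by auto
      show ?thesis unfolding pow_pow_q ex by (rule pow_card)
    qed
    also have "2 * (i + 1) = 2 * i + 2" by simp
    finally show "Tr q n (u * (a i ^ q * w ^ q) ^ (q ^ (2 * (n - i - 1)))) = Tr q n (w ^ q * a i ^ q * u ^ (q ^ (2*i + 2)))"
      by (simp add: X_def algebra_simps)
  qed
  finally show ?thesis using R by simp
qed

definition gv :: "(nat \<Rightarrow> 'a) \<Rightarrow> 'a \<Rightarrow> 'a \<Rightarrow> 'a \<Rightarrow> 'a" where
  "gv a v u w = Tr q n (u * (v * linLstar q n a (w ^ q) + linL q n a (w ^ q)))"

lemma gv_split: "v \<in> K \<Longrightarrow> gv a v (u::'a) w = Tr q n (u * linL q n a (w ^ q)) + v * Tr q n (u * linLstar q n a (w ^ q))"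
  by (simp add: gv_def distrib_left Tr_add Tr_scal[symmetric] algebra_simps)

lemma herm:
  assumes vU: "v \<in> Uset q"
  shows "hermf q n K v (gv a v)"
proof -
  have vK: "v \<in> K" using vU U_sub_K by auto
  have v1: "v ^ (q+1) = 1" using vU by (simp add: Uset_def)
  show ?thesis
  proof (unfold_locales)
    show "v ^ (q+1) = 1" by (rule v1)
    show "gv a v (u1 + u2) w = gv a v u1 w + gv a v u2 w" for u1 u2 w
      by (simp add: gv_def distrib_right Tr_add)
    show "gv a v (c * u) w = c * gv a v u w" if "c \<in> K" for c u w
      using that by (simp add: gv_def Tr_scal mult.assoc)
    show "gv a v u w \<in> K" for u w by (simp add: gv_def Tr_in_K)
    show "gv a v w u = v * gv a v u w ^ q" for u w
    proof -
      define A where "A x y = Tr q n (x * linL q n a (y ^ q))" for x y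
      have B: "Tr q n (x * linLstar q n a (y ^ q)) = (A y x) ^ q" for x y
        by (simp add: A_def crux)
      have AK: "(A x y) ^ (q^2) = A x y" for x y using Tr_in_K by (simp add: A_def K_iff)
      have "gv a v w u = A w u + v * (A u w) ^ q" using gv_split[OF vK] B by (simp add: A_def)
      moreover have "v * gv a v u w ^ q = v * (A u w) ^ q + v ^ (q+1) * (A w u) ^ (q^2)"
        using gv_split[OF vK, of a u w] B[of u w]
        by (simp add: A_def frob_add1 power_mult_distrib power_mult[symmetric] power2_eq_square algebra_simps)
      ultimately show ?thesis using v1 AK by simp
    qed
  qed
qed

end

context ffq
begin

lemma Tr_0 [simp]: "Tr q n (0::'a) = 0"
  using q_pos by (simp add: Tr_def power_0_left)

lemma card_filter_sum: "finite A \<Longrightarrow> card {x\<in>A. P x} = (\<Sum>x\<in>A. if P x then 1 else (0::nat))"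
  by (simp add: sum.If_cases Collect_conj_eq Int_commute inf_set_def)

lemma ker_subsp: "v \<in> K \<Longrightarrow> subsp {x::'a. v * linLstar q n a x + linL q n a x = 0}"
  unfolding subsp_def
proof (intro conjI ballI)
  assume v: "v \<in> K"
  show "(0::'a) \<in> {x. v * linLstar q n a x + linL q n a x = 0}"
    using Ls_scal[OF K_0, of a 0] L_scal[OF K_0, of a 0] by simp
  fix x y :: 'a
  assume "x \<in> {x. v * linLstar q n a x + linL q n a x = 0}" "y \<in> {x. v * linLstar q n a x + linL q n a x = 0}"
  then show "x + y \<in> {x. v * linLstar q n a x + linL q n a x = 0}"
    by (simp add: Ls_add L_add algebra_simps)
next
  fix c x :: 'a
  assume c: "c \<in> K" and "x \<in> {x. v * linLstar q n a x + linL q n a x = 0}"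
  then show "c * x \<in> {x. v * linLstar q n a x + linL q n a x = 0}"
  proof -
    have "v * linLstar q n a (c*x) + linL q n a (c*x) = c * (v * linLstar q n a x + linL q n a x)"
      unfolding Ls_scal[OF c] L_scal[OF c] by (simp add: algebra_simps)
    then show ?thesis using \<open>x \<in> _\<close> by simp
  qed
qed

lemma frob_surj: "surj (\<lambda>u::'a. u ^ q)"
  by (rule finite_UNIV_inj_surj) (auto intro: inj_onI frob_inj1)

lemma rad_card:
  assumes vU: "v \<in> Uset q"
  shows "card (hermf.rad (gv a v) (UNIV::'a set)) = card {x::'a. v * linLstar q n a x + linL q n a x = 0}"
proof -
  interpret H: hermf q n K v "gv a v" by (rule herm[OF vU])
  define M where "M x = v * linLstar q n a x + linL q n a x" for x
  have "H.rad UNIV = (\<lambda>u. u ^ q) -` {x. M x = 0}"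
  proof (rule subset_antisym; rule subsetI)
    fix u assume "u \<in> H.rad UNIV"
    then have h: "\<forall>w. gv a v u w = 0" by (simp add: H.rad_def)
    have "gv a v w u = 0" for w using H.G2[of w u] h q_pos by (simp add: power_0_left)
    then have "\<forall>w. gv a v w u = 0" by blast
    then have t: "\<forall>w. Tr q n (w * M (u ^ q)) = 0" by (simp add: gv_def M_def)
    show "u \<in> (\<lambda>u. u ^ q) -` {x. M x = 0}"
    proof (rule ccontr)
      assume "u \<notin> (\<lambda>u. u ^ q) -` {x. M x = 0}"
      then have y: "M (u ^ q) \<noteq> 0" by simp
      obtain s :: 'a where s: "Tr q n s \<noteq> 0" using Tr_nonzero by auto
      have "Tr q n (s / M (u ^ q) * M (u ^ q)) = 0" using t by blast
      then show False using s y by simp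
    qed
  next
    fix u assume "u \<in> (\<lambda>u. u ^ q) -` {x. M x = 0}"
    then have "M (u ^ q) = 0" by simp
    then have "\<forall>w. gv a v w u = 0" by (simp add: gv_def M_def)
    then have "gv a v u w = 0" for w using H.G2[of u w] q_pos by (simp add: power_0_left)
    then have "\<forall>w. gv a v u w = 0" by blast
    then show "u \<in> H.rad UNIV" by (simp add: H.rad_def)
  qed
  then have "card (H.rad UNIV) = card {x. M x = 0}"
    using card_vimage_inj[of "\<lambda>u::'a. u ^ q" "{x. M x = 0}"] frob_surj
    by (simp add: inj_def frob_inj1)
  then show ?thesis by (simp add: M_def)
qed

lemma Zc_formula:
  assumes vU: "v \<in> Uset q" and t: "t \<in> K" "t = v * t ^ q"
  shows "real q * real (hermf.Zc (gv a v) (UNIV::'a set) t) =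
     real (q^(2*n)) - real (q^(2*n)) * (-1/real q)^(Rk q n a v)
     + (if t = 0 then real q * real (q^(2*n)) * (-1/real q)^(Rk q n a v) else 0)"
proof -
  interpret H: hermf q n K v "gv a v" by (rule herm[OF vU])
  have vK: "v \<in> K" using vU U_sub_K by auto
  have sU: "subsp (UNIV::'a set)" by (simp add: subsp_def)
  obtain r where r1: "card (UNIV::'a set) = q^(2*r) * card (H.rad UNIV)"
    and r2: "real q * real (H.Zc UNIV 0) = real (card (UNIV::'a set)) + (real q - 1) * real (card (UNIV::'a set)) * (-1/real q)^r"
    and r3: "\<And>t. t \<in> K \<Longrightarrow> t \<noteq> 0 \<Longrightarrow> t = v * t^q \<Longrightarrow>
       real q * real (H.Zc UNIV t) = real (card (UNIV::'a set)) - real (card (UNIV::'a set)) * (-1/real q)^r"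
    using H.count_main[OF sU] by blast
  define d where "d = dim_over K {x::'a. v * linLstar q n a x + linL q n a x = 0}"
  have "card (H.rad UNIV) = (q^2)^d"
    unfolding rad_card[OF vU] d_def by (rule card_dim[OF ker_subsp[OF vK]])
  then have "q^(2*n) = q^(2*r + 2*d)" using r1 cardE by (simp add: power_add power_mult)
  then have "2*n = 2*r + 2*d" using q_pow_inj by blast
  then have rR: "r = Rk q n a v" by (simp add: Rk_def d_def Kdef)
  show ?thesis
  proof (cases "t = 0")
    case True
    then show ?thesis using r2 rR cardE by (simp add: algebra_simps)
  next
    case False
    then show ?thesis using r3[OF t(1) False t(2)] rR cardE by simp
  qed
qed

lemma gv_diag: "v \<in> K \<Longrightarrow> gv a v u u = Tr q n ((u::'a) * linL q n a (u ^ q)) + v * (Tr q n (u * linL q n a (u ^ q))) ^ q"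
  by (simp add: gv_split crux)

lemma count_v:
  assumes x: "x \<in> K"
  shows "card {v \<in> Uset q. x + v * x ^ q = (0::'a)} = (if x = 0 then q + 1 else 1)"
proof (cases "x = 0")
  case True
  then show ?thesis using q_pos card_U by (simp add: power_0_left)
next
  case False
  define w where "w = - (x / x ^ q)"
  have xq: "x ^ q \<noteq> 0" using False by simp
  have "w \<in> Uset q"
  proof -
    define y where "y = x / x^q"
    have "w ^ (q+1) = w ^ q * w" by simp
    also have "w ^ q = - (y ^ q)" unfolding w_def y_def by (rule frob_minus1)
    also have "- (y ^ q) * w = y ^ q * y" by (simp add: w_def y_def)
    also have "y ^ q = x ^ q / x ^ (q^2)"
      by (simp add: y_def power_divide power_mult[symmetric] power2_eq_square)
    also have "x ^ (q^2) = x" using x by (simp add: K_iff)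
    finally have "w ^ (q+1) = x ^ q / x * (x / x^q)" by (simp add: y_def)
    then show ?thesis using False xq by (simp add: Uset_def)
  qed
  moreover have "x + v * x ^ q = 0 \<longleftrightarrow> v = w" for v
    using xq by (auto simp: w_def field_simps eq_neg_iff_add_eq_0)
  ultimately have "{v \<in> Uset q. x + v * x ^ q = 0} = {w}" by auto
  then show ?thesis using False by simp
qed

end

context ffq
begin

lemma Ncount_eq:
  assumes cK: "c \<in> K"
  shows "real q^2 * real (Ncount q n a c) =
    real (q^(2*n)) - real (q^(2*n)) * (\<Sum>v\<in>Uset q. (-1/real q)^(Rk q n a v))
    + real q * real (q^(2*n)) * (\<Sum>v\<in>{v\<in>Uset q. c + v * c^q = (0::'a)}. (-1/real q)^(Rk q n a v))"
proof -
  define Q where "Q u = Tr q n ((u::'a) * linL q n a (u ^ q))" for u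
  define P where "P v u = ((Q u + c) + v * (Q u + c)^q = 0)" for v u
  define t where "t v = - (c + v * c^q)" for v
  define E where "E = real (q^(2*n))"
  define rho where "rho v = (-1/real q)^(Rk q n a v)" for v
  have QK: "Q u + c \<in> K" for u by (simp add: Q_def Tr_in_K K_add cK)
  have finU: "finite (Uset q :: 'a set)" by simp
  have dc: "(\<Sum>v\<in>Uset q. card {u. P v u}) = q^(2*n) + q * Ncount q n a c"
  proof -
    have cf: "card {u. P v u} = (\<Sum>u\<in>UNIV. if P v u then 1 else (0::nat))" for v
      using card_filter_sum[of UNIV "P v"] by simp
    have "(\<Sum>v\<in>Uset q. card {u. P v u}) = (\<Sum>v\<in>Uset q. \<Sum>u\<in>UNIV. if P v u then 1 else (0::nat))"
      using cf by simp
    also have "\<dots> = (\<Sum>u\<in>UNIV. \<Sum>v\<in>Uset q. if P v u then 1 else (0::nat))"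
      by (rule sum.swap)
    also have "\<dots> = (\<Sum>u\<in>UNIV. card {v\<in>Uset q. P v u})"
      using card_filter_sum[OF finU, of "\<lambda>v. P v u" for u] by simp
    also have "\<dots> = (\<Sum>u\<in>UNIV. 1 + (if Q u + c = 0 then q else 0))"
      by (intro sum.cong refl) (simp add: P_def count_v[OF QK])
    also have "\<dots> = (\<Sum>u\<in>(UNIV::'a set). (1::nat)) + (\<Sum>u\<in>UNIV. if Q u + c = 0 then q else 0)"
      by (simp only: sum.distrib)
    also have "(\<Sum>u\<in>UNIV. if Q u + c = 0 then q else 0) = (\<Sum>u\<in>UNIV. q * (if Q u + c = 0 then 1 else 0))"
      by (intro sum.cong refl) simp
    also have "\<dots> = q * (\<Sum>u\<in>UNIV. if Q u + c = 0 then 1 else 0)"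
      by (rule sum_distrib_left[symmetric])
    also have "(\<Sum>u\<in>(UNIV::'a set). (1::nat)) = card (UNIV::'a set)" by simp
    also have "(\<Sum>u\<in>UNIV. if Q u + c = 0 then 1 else 0) = Ncount q n a c"
      using card_filter_sum[of UNIV "\<lambda>u. Q u + c = 0"] by (simp add: Ncount_def Q_def)
    finally show ?thesis using cardE by simp
  qed
  have Pz: "card {u. P v u} = hermf.Zc (gv a v) UNIV (t v)" if vU: "v \<in> Uset q" for v
  proof -
    interpret H: hermf q n K v "gv a v" by (rule herm[OF vU])
    have vK: "v \<in> K" using vU U_sub_K by auto
    have "P v u \<longleftrightarrow> gv a v u u = t v" for u
    proof -
      have e: "(Q u + c) + v * (Q u + c)^q = gv a v u u - t v"
        by (simp add: gv_diag[OF vK] Q_def t_def frob_add1 algebra_simps)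
      show ?thesis unfolding P_def e by simp
    qed
    then show ?thesis by (simp add: H.Zc_def)
  qed
  have tprop: "t v \<in> K \<and> t v = v * (t v)^q" if vU: "v \<in> Uset q" for v
  proof
    have vK: "v \<in> K" using vU U_sub_K by auto
    show "t v \<in> K" unfolding t_def using vK cK by (intro K_minus K_add K_mult K_power)
    have v1: "v ^ (q+1) = 1" using vU by (simp add: Uset_def)
    have cq: "c ^ (q^2) = c" using cK by (simp add: K_iff)
    have "(t v)^q = - (c^q + v^q * (c^q)^q)"
      by (simp only: t_def frob_minus1 frob_add1 power_mult_distrib)
    also have "(c^q)^q = c" using cq by (simp add: power_mult[symmetric] power2_eq_square)
    finally have tq: "(t v)^q = - (c^q + v^q * c)" .
    have "v * (t v)^q = - (v * c^q + v^(q+1) * c)" unfolding tq by (simp add: algebra_simps)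
    then have h2: "v * (t v)^q = - (v * c^q + c)" using v1 by simp
    have teq: "t v = - (v * c^q + c)" by (simp add: t_def add.commute)
    show "t v = v * (t v)^q" by (metis h2 teq)
  qed
  have each: "real q * real (card {u. P v u}) = E - E * rho v + (if c + v * c^q = 0 then real q * E * rho v else 0)"
    if vU: "v \<in> Uset q" for v
  proof -
    have "t v = 0 \<longleftrightarrow> c + v * c^q = 0" unfolding t_def by (rule neg_equal_0_iff_equal)
    then show ?thesis
      using Zc_formula[OF vU, of "t v" a] tprop[OF vU] Pz[OF vU] by (simp add: E_def rho_def)
  qed
  have "real q * (E + real q * real (Ncount q n a c)) = real q * real (\<Sum>v\<in>Uset q. card {u. P v u})"
    using dc by (simp add: E_def)
  also have "\<dots> = (\<Sum>v\<in>Uset q. real q * real (card {u. P v u}))"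
    by (simp add: sum_distrib_left)
  also have "\<dots> = (\<Sum>v\<in>Uset q. E - E * rho v + (if c + v * c^q = 0 then real q * E * rho v else 0))"
    by (intro sum.cong refl) (rule each)
  also have "\<dots> = (real q + 1) * E - E * (\<Sum>v\<in>Uset q. rho v)
      + real q * E * (\<Sum>v\<in>{v\<in>Uset q. c + v * c^q = 0}. rho v)"
  proof -
    have "(\<Sum>v\<in>Uset q. E - E * rho v + (if c + v * c^q = 0 then real q * E * rho v else 0))
        = (\<Sum>v\<in>(Uset q::'a set). E) - (\<Sum>v\<in>Uset q. E * rho v) + (\<Sum>v\<in>Uset q. if c + v * c^q = 0 then real q * E * rho v else 0)"
      by (simp only: sum.distrib sum_subtractf)
    also have "(\<Sum>v\<in>(Uset q::'a set). E) = (real q + 1) * E" by (simp add: card_U)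
    also have "(\<Sum>v\<in>Uset q. E * rho v) = E * (\<Sum>v\<in>Uset q. rho v)" by (simp add: sum_distrib_left)
    also have "(\<Sum>v\<in>Uset q. if c + v * c^q = 0 then real q * E * rho v else 0)
        = (\<Sum>v\<in>{v\<in>Uset q. c + v * c^q = 0}. real q * E * rho v)"
      by (rule sum.inter_filter[OF finU, symmetric])
    also have "\<dots> = real q * E * (\<Sum>v\<in>{v\<in>Uset q. c + v * c^q = 0}. rho v)"
      by (simp add: sum_distrib_left)
    finally show ?thesis .
  qed
  finally have "real q * (E + real q * real (Ncount q n a c)) = (real q + 1) * E - E * (\<Sum>v\<in>Uset q. rho v)
      + real q * E * (\<Sum>v\<in>{v\<in>Uset q. c + v * c^q = 0}. rho v)" .
  then show ?thesis by (simp add: E_def rho_def algebra_simps power2_eq_square)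
qed

end

lemma powi_conv: "(- real q) powi (- int r) = (-1/real q)^r"
proof -
  have "(- real q) powi (- int r) = 1 / (- real q) ^ r" by (simp add: power_int_minus inverse_eq_divide)
  also have "\<dots> = (1 / (- real q)) ^ r" by (simp only: power_divide power_one)
  also have "1 / (- real q) = -1 / real q" by simp
  finally show ?thesis .
qed


theorem theorem4p1:
  fixes q n :: nat and a :: "nat \<Rightarrow> 'a::{field,finite}"
  assumes "\<exists>p k. prime p \<and> k > 0 \<and> q = p ^ k"
    and "n > 0"
    and "card (UNIV :: 'a set) = q ^ (2*n)"
  shows "(real (Ncount q n a 0) =
           real q ^ (2*(n-1)) + (real q - 1) * real q ^ (2*(n-1)) *
             (\<Sum>v\<in>Uset q. (- real q) powi (- int (Rk q n a v)))) \<and>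
         (\<forall>c\<in>Fq2 q. c \<noteq> 0 \<longrightarrow>
           real (Ncount q n a c) =
             real q ^ (2*(n-1)) + real q ^ (2*n-1) * (- real q) powi (- int (Rk q n a (- (c / c ^ q))))
             - real q ^ (2*(n-1)) * (\<Sum>v\<in>Uset q. (- real q) powi (- int (Rk q n a v))))"
proof -
  obtain p k where pk: "prime p" "k > 0" "q = p ^ k" using assms(1) by auto
  have cpos: "CHAR('a) > 0" by (rule finite_imp_CHAR_pos) simp
  have cprime: "prime CHAR('a)" using cpos prime_CHAR_semidom by blast
  have "CHAR('a) dvd card (UNIV :: 'a set)" by (rule CHAR_dvd_CARD)
  then have "CHAR('a) dvd p ^ (k * (2*n))" using assms(3) pk(3) by (simp add: power_mult)
  then have "CHAR('a) dvd p" using cprime prime_dvd_power by blast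
  then have cp: "CHAR('a) = p" using cprime pk(1) primes_dvd_imp_eq by blast
  interpret F: ffq q n "Fq2 q :: 'a set"
    by unfold_locales (use pk cp assms(2,3) in auto)
  define rho where "rho v = (-1/real q)^(Rk q n a v)" for v :: 'a
  define S where "S = (\<Sum>v\<in>Uset q. rho v)"
  have SS: "(\<Sum>v\<in>Uset q. (- real q) powi (- int (Rk q n a v))) = S"
    by (simp add: S_def rho_def powi_conv)
  have qnz: "real q \<noteq> 0" using F.q_pos by simp
  define A where "A = real q ^ (2*(n-1))"
  define B where "B = real q ^ (2*n-1)"
  have EA: "real (q^(2*n)) = real q^2 * A"
  proof -
    have "2*n = 2 + 2*(n-1)" using assms(2) by simp
    then show ?thesis by (simp add: A_def power_add[symmetric] del: of_nat_power)
  qed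
  have EB: "real q * real (q^(2*n)) = real q^2 * B"
  proof -
    have "2*n = 1 + (2*n-1)" using assms(2) by simp
    then have "real q * real q ^ (2*n) = real q^2 * real q ^ (2*n-1)"
      by (metis power_add power2_eq_square power_one_right mult.assoc add_2_eq_Suc' Suc_1 power_Suc)
    then show ?thesis by (simp add: B_def)
  qed
  show ?thesis
  proof (intro conjI ballI impI)
    have "{v \<in> Uset q. (0::'a) + v * 0 ^ q = 0} = Uset q" using F.q_pos by (auto simp: power_0_left)
    then have "real q^2 * real (Ncount q n a 0) = real (q^(2*n)) - real (q^(2*n)) * S + real q * real (q^(2*n)) * S"
      using F.Ncount_eq[of 0 a] by (simp add: S_def rho_def)
    also have "\<dots> = real q^2 * (A + (real q - 1) * A * S)" unfolding EA by (simp add: algebra_simps)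
    finally have "real (Ncount q n a 0) = A + (real q - 1) * A * S" using qnz by simp
    then show "real (Ncount q n a 0) = real q ^ (2*(n-1)) + (real q - 1) * real q ^ (2*(n-1)) *
             (\<Sum>v\<in>Uset q. (- real q) powi (- int (Rk q n a v)))" by (simp add: SS A_def)
  next
    fix c :: 'a assume cK: "c \<in> Fq2 q" and c0: "c \<noteq> 0"
    define w where "w = - (c / c ^ q)"
    have cq: "c ^ q \<noteq> 0" using c0 by simp
    have sub: "{v \<in> Uset q. c + v * c ^ q = 0} \<subseteq> {w}"
      using cq by (auto simp: w_def field_simps eq_neg_iff_add_eq_0)
    have "card {v \<in> Uset q. c + v * c ^ q = 0} = 1" using F.count_v[OF cK] c0 by simp
    then obtain x where x: "{v \<in> Uset q. c + v * c ^ q = 0} = {x}" by (rule card_1_singletonE)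
    with sub have seq: "{v \<in> Uset q. c + v * c ^ q = 0} = {w}" by auto
    have "real q^2 * real (Ncount q n a c) = real (q^(2*n)) - real (q^(2*n)) * S + real q * real (q^(2*n)) * rho w"
      using F.Ncount_eq[OF cK, of a] seq by (simp add: S_def rho_def)
    also have "\<dots> = real q^2 * (A - A * S + B * rho w)"
      unfolding mult.assoc[symmetric] EB unfolding EA by (simp add: algebra_simps)
    finally have "real (Ncount q n a c) = A - A * S + B * rho w" using qnz by simp
    then show "real (Ncount q n a c) =
             real q ^ (2*(n-1)) + real q ^ (2*n-1) * (- real q) powi (- int (Rk q n a (- (c / c ^ q))))
             - real q ^ (2*(n-1)) * (\<Sum>v\<in>Uset q. (- real q) powi (- int (Rk q n a v)))"
      unfolding SS by (simp add: A_def B_def rho_def powi_conv w_def)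
  qed
qed


end
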